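(* For each natural number $m\ge1$, the sequence $H(n)\bmod m$ is uniformly distributed in $\{0,1,\dots,m-1\}$: for every $j\in\{0,\dots,m-1\}$, $\frac1N\#\{1\le n\le N: H(n)\equiv j \pmod m\}\to\frac1m$ as $N\to\infty$.
   Context: $H$ is Hofstadter's $H$ sequence: $H(1)=1$ and $H(n)=n-H(H(H(n-1)))$ for $n>1$. *)

theory Defs
  imports "HOL-Analysis.Analysis"
begin

text \<open>Hofstadter's H sequence: H(1)=1, H(n) = n - H(H(H(n-1))) for n>1.
  The value at 0 is fixed to 0 (irrelevant convention) so that the
  function is uniquely determined.\<close>
definition hofH :: "nat \<Rightarrow> nat" where
  "hofH = (THE h. h 0 = 0 \<and> h 1 = 1 \<and> (\<forall>n>1. h n = n - h (h (h (n - 1)))))"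

end

theory Submission
  imports Defs
begin

primrec hl :: "nat \<Rightarrow> nat list" where
  "hl 0 = [0]"
| "hl (Suc n) = hl n @ [if n = 0 then 1 else Suc n - hl n ! (hl n ! (hl n ! n))]"

lemma hl_len: "length (hl n) = Suc n" by (induct n) auto

lemma hl_prefix: "k \<le> n \<Longrightarrow> hl n ! k = hl k ! k"
proof (induct n)
  case 0 then show ?case by simp
next
  case (Suc n)
  show ?case
  proof (cases "k \<le> n")
    case True
    then have "hl (Suc n) ! k = hl n ! k" by (simp add: nth_append hl_len)
    then show ?thesis using Suc True by simp
  next
    case False then have "k = Suc n" using Suc by simp
    then show ?thesis by simp
  qed
qed

definition hf :: "nat \<Rightarrow> nat" where "hf n = hl n ! n"

lemma hf_Suc: "hf (Suc n) = (if n = 0 then 1 else Suc n - hl n ! (hl n ! (hl n ! n)))"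
  by (simp add: hf_def nth_append hl_len)

lemma hf_le: "hf n \<le> n"
proof (cases n)
  case 0 then show ?thesis by (simp add: hf_def)
next
  case (Suc k) then show ?thesis using hf_Suc[of k] by simp
qed

lemma hf_rec: "n \<ge> 1 \<Longrightarrow> hf (Suc n) = Suc n - hf (hf (hf n))"
proof -
  assume n: "n \<ge> 1"
  have a: "hl n ! n = hf n" by (simp add: hf_def)
  have b: "hl n ! (hf n) = hf (hf n)"
    by (simp only: hf_def[of "hf n"] hl_prefix[OF hf_le[of n]])
  have le2: "hf (hf n) \<le> n" using hf_le[of n] hf_le[of "hf n"] by linarith
  have c: "hl n ! (hf (hf n)) = hf (hf (hf n))"
    by (simp only: hf_def[of "hf (hf n)"] hl_prefix[OF le2])
  show ?thesis using n by (simp add: hf_Suc a b c)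
qed

lemma hofH_eq: "hofH = hf"
  unfolding hofH_def
proof (rule the_equality)
  show "hf 0 = 0 \<and> hf 1 = 1 \<and> (\<forall>n>1. hf n = n - hf (hf (hf (n - 1))))"
  proof (intro conjI allI impI)
    show "hf 0 = 0" by (simp add: hf_def)
    show "hf 1 = 1" by (simp add: hf_Suc)
    fix n :: nat assume "n > 1"
    then obtain k where k: "n = Suc k" "k \<ge> 1" by (cases n) auto
    then show "hf n = n - hf (hf (hf (n - 1)))" using hf_rec[of k] by simp
  qed
next
  fix h :: "nat \<Rightarrow> nat"
  assume h: "h 0 = 0 \<and> h 1 = 1 \<and> (\<forall>n>1. h n = n - h (h (h (n - 1))))"
  have h0: "h 0 = 0" and h1: "h 1 = 1" using h by auto
  have hr: "\<And>n. n > 1 \<Longrightarrow> h n = n - h (h (h (n - 1)))" using h by blast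
  have hle: "h n \<le> n" for n
  proof -
    have "n = 0 \<or> n = 1 \<or> n > 1" by arith
    then show ?thesis
    proof (elim disjE)
      assume "n > 1" then show ?thesis using hr[of n] by linarith
    qed (use h0 h1 in simp_all)
  qed
  have "h n = hf n" for n
  proof (induct n rule: less_induct)
    case (less n)
    show ?case
    proof (cases "n > 1")
      case True
      then obtain k where k: "n = Suc k" "k \<ge> 1" by (cases n) auto
      have e1: "h k = hf k" using less k by simp
      have e2: "h (hf k) = hf (hf k)" using less k hf_le[of k] by simp
      have e3: "h (hf (hf k)) = hf (hf (hf k))" using less k hf_le[of k] hf_le[of "hf k"] by simp
      have "h n = n - h (h (h k))" using hr[of n] True k by simp
      also have "\<dots> = hf n" using e1 e2 e3 k hf_rec[of k] by simp
      finally show ?thesis .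
    next
      case False
      then have "n = 0 \<or> n = 1" by auto
      then show ?thesis using h0 h1 by (auto simp: hf_def hf_Suc)
    qed
  qed
  then show "h = hf" by auto
qed

lemma H0: "hofH 0 = 0" by (simp add: hofH_eq hf_def)
lemma H1: "hofH 1 = 1" by (simp add: hofH_eq hf_Suc)
lemma Hrec: "n > 1 \<Longrightarrow> hofH n = n - hofH (hofH (hofH (n - 1)))"
  using hf_rec[of "n - 1"] by (simp add: hofH_eq)
lemma Hle: "hofH n \<le> n" by (simp add: hofH_eq hf_le)

lemma step_comp:
  assumes st: "\<And>k. k < M \<Longrightarrow> hofH k \<le> hofH (Suc k) \<and> hofH (Suc k) \<le> Suc (hofH k)"
    and "x \<le> y" "y \<le> Suc x" "y \<le> M"
  shows "hofH x \<le> hofH y \<and> hofH y \<le> Suc (hofH x)"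
proof (cases "y = x")
  case False
  then have "y = Suc x" using assms by arith
  then show ?thesis using st[of x] assms by simp
qed simp

lemma Hstep: "hofH n \<le> hofH (Suc n) \<and> hofH (Suc n) \<le> Suc (hofH n)"
proof (induct n rule: less_induct)
  case (less n)
  show ?case
  proof (cases "n \<le> 1")
    case True
    then have "n = 0 \<or> n = 1" by arith
    moreover have "hofH 2 = 1" using Hrec[of 2] H1 by simp
    ultimately show ?thesis using H0 H1 by (auto simp: numeral_2_eq_2)
  next
    case False
    let ?p = "n - 1"
    have st: "\<And>k. k < n \<Longrightarrow> hofH k \<le> hofH (Suc k) \<and> hofH (Suc k) \<le> Suc (hofH k)"
      using less by blast
    have s1: "hofH ?p \<le> hofH n \<and> hofH n \<le> Suc (hofH ?p)"
      using step_comp[OF st, where x="n - 1" and y=n] False by simp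
    have b1: "hofH n \<le> n" by (rule Hle)
    have s2: "hofH (hofH ?p) \<le> hofH (hofH n) \<and> hofH (hofH n) \<le> Suc (hofH (hofH ?p))"
      using step_comp[OF st, where x="hofH (n - 1)" and y="hofH n"] s1 b1 False by simp
    have b2: "hofH (hofH n) \<le> n" using Hle[of "hofH n"] b1 by linarith
    have s3: "hofH (hofH (hofH ?p)) \<le> hofH (hofH (hofH n)) \<and> hofH (hofH (hofH n)) \<le> Suc (hofH (hofH (hofH ?p)))"
      using step_comp[OF st, where x="hofH (hofH (n - 1))" and y="hofH (hofH n)"] s2 b2 False by simp
    have b3: "hofH (hofH (hofH ?p)) \<le> ?p"
      using Hle[of ?p] Hle[of "hofH ?p"] Hle[of "hofH (hofH ?p)"] by linarith
    have r1: "hofH n = n - hofH (hofH (hofH ?p))" using Hrec[of n] False by simp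
    have r2: "hofH (Suc n) = Suc n - hofH (hofH (hofH n))" using Hrec[of "Suc n"] False by simp
    show ?thesis using r1 r2 s3 b3 False by linarith
  qed
qed

lemma Hmono: "x \<le> y \<Longrightarrow> hofH x \<le> hofH y"
  using Hstep by (metis lift_Suc_mono_le)

lemma Hpos: "n \<ge> 1 \<Longrightarrow> hofH n \<ge> 1"
  using Hmono[of 1 n] H1 by simp

fun na :: "nat \<Rightarrow> nat" where
  "na 0 = 1" | "na (Suc 0) = 2" | "na (Suc (Suc 0)) = 3"
| "na (Suc (Suc (Suc n))) = na (Suc (Suc n)) + na n"

lemma na_pos: "na k \<ge> 1"
  by (induct k rule: na.induct) auto

lemma na_Suc_gt: "na k < na (Suc k)"
proof (cases k)
  case (Suc k1) then show ?thesis
  proof (cases k1)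
    case (Suc k2) then show ?thesis using \<open>k = Suc k1\<close> na_pos[of k2] by simp
  qed simp
qed simp

lemma na_Suc_le: "na (Suc k) \<le> 2 * na k"
proof (cases k)
  case (Suc k1) then show ?thesis
  proof (cases k1)
    case (Suc k2) then show ?thesis using \<open>k = Suc k1\<close> na_Suc_gt[of k2] na_Suc_gt[of "Suc k2"] by simp
  qed simp
qed simp

lemma na_smono: "strict_mono na"
  using na_Suc_gt by (simp add: strict_mono_Suc_iff)

lemma na_less_iff: "na i < na j \<longleftrightarrow> i < j"
  using na_smono by (simp add: strict_mono_less)

lemma na_le_iff: "na i \<le> na j \<longleftrightarrow> i \<le> j"
  using na_smono by (simp add: strict_mono_less_eq)

lemma na_rec: "na (k + 3) = na (k + 2) + na k"
  by (simp add: numeral_3_eq_3 numeral_2_eq_2)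

lemma Hsmall: "hofH 2 = 1" "hofH 3 = 2" "hofH 4 = 3" "hofH 5 = 4" "hofH 6 = 4"
proof -
  show h2: "hofH 2 = 1" using Hrec[of 2] H1 by simp
  show h3: "hofH 3 = 2" using Hrec[of 3] h2 H1 by simp
  show h4: "hofH 4 = 3" using Hrec[of 4] h3 h2 H1 by simp
  show h5: "hofH 5 = 4" using Hrec[of 5] h4 h3 h2 by simp
  show h6: "hofH 6 = 4" using Hrec[of 6] h5 h4 h3 by simp
qed

lemma na_rec': "na (k + 4) = na (k + 3) + na (k + 1)"
  by (simp add: numeral_eq_Suc)

lemma block_gen: "na (k+2) < n \<Longrightarrow> n \<le> na (k+3) \<Longrightarrow> hofH n = na (k+1) + hofH (n - na (k+2))"
proof (induction n arbitrary: k rule: less_induct)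
  case (less n)
  note IH = less.IH
  note lo = less.prems(1) and hi = less.prems(2)
  have Ha: "hofH (na (Suc j)) = na j" if "na (Suc j) < n" for j
    using that
  proof (induction j rule: less_induct)
    case (less j)
    have "j = 0 \<or> j = 1 \<or> (\<exists>i. j = i + 2)" by presburger
    then consider "j = 0" | "j = 1" | i where "j = i + 2" by blast
    then show ?case
    proof cases
      case 1 then show ?thesis using Hsmall by (simp add: numeral_2_eq_2)
    next
      case 2 then show ?thesis using Hsmall by (simp add: numeral_2_eq_2 numeral_3_eq_3)
    next
      case 3
      have lt: "na (i+2) < na (i+3)" by (simp add: na_less_iff)
      have e: "hofH (na (i+3)) = na (i+1) + hofH (na (i+3) - na (i+2))"
        using IH[of "na (i+3)" i] lt less.prems 3 by (simp add: add.commute numeral_3_eq_3)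
      have d: "na (i+3) - na (i+2) = na i" using na_rec[of i] by simp
      show ?thesis
      proof (cases i)
        case 0 then show ?thesis using e d H1 by (simp add: numeral_3_eq_3 numeral_2_eq_2 3)
      next
        case (Suc i')
        have "na (Suc i') < n" using less.prems 3 Suc na_less_iff[of "Suc i'" "Suc j"] by simp
        then have "hofH (na (Suc i')) = na i'" using less.IH[of i'] 3 Suc by simp
        moreover have "na (i'+3) = na (i'+2) + na i'" by (rule na_rec)
        ultimately show ?thesis using e d 3 Suc by (simp add: numeral_3_eq_3 numeral_2_eq_2)
      qed
    qed
  qed
  define t where "t = n - na (k+2)"
  have nt: "n = na (k+2) + t" using lo t_def by simp
  have t1: "t \<ge> 1" using lo t_def by simp
  have tk: "t \<le> na k" using hi nt na_rec[of k] by simp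
  have n1: "n > 1" using lo na_pos[of "k+2"] by simp
  have rn: "hofH n = n - hofH (hofH (hofH (n - 1)))" using Hrec n1 by blast
  show ?case
  proof (cases "t = 1")
    case True
    have a1: "hofH (n - 1) = na (k+1)" using Ha[of "k+1"] nt True by simp
    have a2: "hofH (na (k+1)) = na k" using Ha[of k] nt True na_less_iff[of "k+1" "k+2"] by simp
    show ?thesis
    proof (cases k)
      case 0 then show ?thesis using rn a1 a2 nt True H1 by (simp add: numeral_2_eq_2)
    next
      case (Suc k')
      have a3: "hofH (na k) = na k'" using Ha[of k'] nt True na_less_iff[of "k" "k+2"] Suc by simp
      have "na (k'+3) = na (k'+2) + na k'" by (rule na_rec)
      then show ?thesis using rn a1 a2 a3 nt True H1 Suc by (simp add: numeral_3_eq_3 numeral_2_eq_2)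
    qed
  next
    case False
    then have t2: "t \<ge> 2" using t1 by simp
    have "k = 0 \<or> k = 1 \<or> (\<exists>i. k = i + 2)" by presburger
    then consider "k = 0" | "k = 1" | k2 where "k = k2 + 2" by blast
    then show ?thesis
    proof cases
      case 1 then show ?thesis using tk t2 by simp
    next
      case 2
      then have "t = 2" using tk t2 by (simp add: numeral_2_eq_2)
      then have "n = 6" using nt 2 by (simp add: numeral_2_eq_2 numeral_3_eq_3)
      then show ?thesis using Hsmall 2 by (simp add: numeral_2_eq_2 numeral_3_eq_3)
    next
      case 3
      have i1: "hofH (n - 1) = na (k+1) + hofH (t - 1)"
        using IH[of "n - 1" k] nt t2 hi by simp
      define s where "s = hofH (t - 1)"
      have s1: "s \<ge> 1" using Hpos[of "t - 1"] t2 s_def by simp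
      have hk: "hofH (na k) = na (k2+1)" using Ha[of "k2+1"] 3 nt na_pos[of k2] by simp
      have s2: "s \<le> na (k2+1)" using Hmono[of "t - 1" "na k"] tk hk s_def by simp
      have r4: "na (k2+4) = na (k2+3) + na (k2+1)" by (rule na_rec')
      have i2: "hofH (na (k2+3) + s) = na (k2+2) + hofH s"
      proof -
        have A: "na (k2+3) < na (k2+3) + s" using s1 by simp
        have B: "na (k2+3) + s \<le> na (k2+4)" using s2 r4 by simp
        have "k + 2 = k2 + 4" using 3 by simp
        then have nt4: "n = na (k2+4) + t" using nt by metis
        have C: "na (k2+3) + s < n" using B nt4 t1 by linarith
        have eqs: "k2+1+2 = k2+3" "k2+1+3 = k2+4" "k2+1+1 = k2+2" by simp_all
        note I0 = IH[OF C, of "k2+1", unfolded eqs]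
        then have "hofH (na (k2+3)+s) = na (k2+2) + hofH (na (k2+3)+s - na (k2+3))" using A B by blast
        then show ?thesis by simp
      qed
      define s' where "s' = hofH s"
      have s'1: "s' \<ge> 1" using Hpos s1 s'_def by simp
      have hk2: "hofH (na (k2+1)) = na k2" using Ha[of k2] 3 nt na_pos[of k2] by simp
      have s'2: "s' \<le> na k2" using Hmono[OF s2] hk2 s'_def by simp
      have r3: "na (k2+3) = na (k2+2) + na k2" by (rule na_rec)
      have "k + 2 = k2 + 4" using 3 by simp
      then have nt4': "n = na (k2+4) + t" using nt by metis
      have "na (k2+3) < na (k2+4)" by (simp only: na_less_iff)
      then have ltn: "na (k2+3) < n" using nt4' by linarith
      have i3: "hofH (na (k2+2) + s') = na (k2+1) + hofH s'"
        using IH[of "na (k2+2) + s'" k2] s'1 s'2 r3 ltn by (simp add: add.assoc)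
      have rt: "hofH t = t - hofH s'" using Hrec[of t] t2 s_def s'_def by simp
      have bt: "hofH s' \<le> t - 1" using Hle[of s'] Hle[of s] Hle[of "t-1"] s_def s'_def by linarith
      have i1': "hofH (n - 1) = na (k2+3) + s"
      proof -
        have "k+1 = k2+3" using 3 by simp
        then show ?thesis using i1 s_def by metis
      qed
      have h3: "hofH (hofH (hofH (n - 1))) = na (k2+1) + hofH s'"
        by (simp only: i1' i2 s'_def[symmetric] i3)
      have "k+1 = k2+3" "n - na (k+2) = t" using 3 t_def by simp_all
      then have goal: "?thesis \<longleftrightarrow> hofH n = na (k2+3) + hofH t" by metis
      show ?thesis unfolding goal using rn h3 nt4' r4 rt bt t2 by linarith
    qed
  qed
qed

lemma H_na: "hofH (na (Suc j)) = na j"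
proof (induction j rule: less_induct)
  case (less j)
  have "j = 0 \<or> j = 1 \<or> (\<exists>i. j = i + 2)" by presburger
    then consider "j = 0" | "j = 1" | i where "j = i + 2" by blast
  then show ?case
  proof cases
    case 1 then show ?thesis using Hsmall by (simp add: numeral_2_eq_2)
  next
    case 2 then show ?thesis using Hsmall by (simp add: numeral_2_eq_2 numeral_3_eq_3)
  next
    case 3
    have e: "hofH (na (i+3)) = na (i+1) + hofH (na (i+3) - na (i+2))"
      using block_gen[of i "na (i+3)"] by (simp add: na_less_iff)
    have d: "na (i+3) - na (i+2) = na i" using na_rec[of i] by simp
    show ?thesis
    proof (cases i)
      case 0 then show ?thesis using e d H1 by (simp add: numeral_3_eq_3 numeral_2_eq_2 3)
    next
      case (Suc i')
      have "hofH (na (Suc i')) = na i'" using less.IH[of i'] 3 Suc by simp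
      moreover have "na (i'+3) = na (i'+2) + na i'" by (rule na_rec)
      ultimately show ?thesis using e d 3 Suc by (simp add: numeral_3_eq_3 numeral_2_eq_2)
    qed
  qed
qed

lemma contract:
  fixes r a :: "nat \<Rightarrow> real" and L :: "nat \<Rightarrow> bool"
  assumes a_rec: "\<And>k. a (k+3) = a (k+2) + a k"
    and a_pos: "\<And>k. a k > 0"
    and a_le: "\<And>k. a (Suc k) \<le> 2 * a k"
    and r_nn: "\<And>k. r k \<ge> 0"
    and r_rec: "\<And>k. r (k+3) \<le> r (k+2) + r k"
    and loss: "\<And>k. L k \<Longrightarrow> r (k+5) \<le> (2 - c) * r (k+2) + r (k+1) + r k"
    and Lex: "\<And>k. L k \<or> L (k+1) \<or> L (k+2)"
    and c: "0 < c" "c \<le> 1"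
    and R: "R \<ge> 0"
    and P: "\<And>k. k \<ge> i \<Longrightarrow> r k \<le> R * a k"
    and kk: "k \<ge> i + 8"
  shows "r k \<le> R * (1 - c/32) * a k"
proof -
  obtain k1 where k1: "L k1" "i \<le> k1" "k1 \<le> i + 2" using Lex[of i] by force
  define e where "e j = R * a j - r j" for j
  define \<delta> where "\<delta> = c * R / 32"
  have e0: "e j \<ge> 0" if "j \<ge> i" for j using P[OF that] e_def by simp
  have erec: "e (j+3) \<ge> e (j+2) + e j" if "j \<ge> i" for j
  proof -
    have "R * a (j+3) = R * a (j+2) + R * a j" by (simp add: a_rec distrib_left)
    then show ?thesis unfolding e_def using r_rec[of j] by linarith
  qed
  have a5: "a (k1+5) = 2 * a (k1+2) + a (k1+1) + a k1"
    using a_rec[of k1] a_rec[of "k1+1"] a_rec[of "k1+2"] by (simp add: numeral_eq_Suc)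
  have l: "r (k1+5) \<le> (2 - c) * r (k1+2) + r (k1+1) + r k1" using loss k1 by blast
  have m1: "(2 - c) * r (k1+2) \<le> (2 - c) * (R * a (k1+2))"
    using P[of "k1+2"] k1 c by (intro mult_left_mono) auto
  have "r (k1+5) \<le> (2 - c) * (R * a (k1+2)) + R * a (k1+1) + R * a k1"
    using l m1 P[of "k1+1"] P[of k1] k1 by linarith
  moreover have "R * a (k1+5) = 2 * (R * a (k1+2)) + R * a (k1+1) + R * a k1"
    using a5 by (simp add: algebra_simps)
  moreover have "(2 - c) * (R * a (k1+2)) = 2 * (R * a (k1+2)) - c * R * a (k1+2)"
    by (simp add: algebra_simps)
  ultimately have ek0: "e (k1+5) \<ge> c * R * a (k1+2)"
    unfolding e_def by linarith
  have ek1: "e (k1+6) \<ge> e (k1+5)" using erec[of "k1+3"] e0[of "k1+3"] k1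
    by (simp add: add.assoc numeral_eq_Suc)
  have ek2: "e (k1+7) \<ge> e (k1+6)" using erec[of "k1+4"] e0[of "k1+4"] k1
    by (simp add: add.assoc numeral_eq_Suc)
  have cR: "c * R \<ge> 0" using c R by simp
  have a3: "a (k1+3) \<le> 2 * a (k1+2)" using a_le[of "k1+2"] by (simp add: numeral_eq_Suc)
  have a4: "a (k1+4) \<le> 2 * a (k1+3)" using a_le[of "k1+3"] by (simp add: numeral_eq_Suc)
  have a5': "a (k1+5) \<le> 2 * a (k1+4)" using a_le[of "k1+4"] by (simp add: numeral_eq_Suc)
  have a6: "a (k1+6) \<le> 2 * a (k1+5)" using a_le[of "k1+5"] by (simp add: numeral_eq_Suc)
  have a7: "a (k1+7) \<le> 2 * a (k1+6)" using a_le[of "k1+6"] by (simp add: numeral_eq_Suc)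
  have b5: "\<delta> * a (k1+5) \<le> c * R * a (k1+2)"
  proof -
    have "a (k1+5) \<le> 32 * a (k1+2)" using a3 a4 a5' a_pos[of "k1+2"] by linarith
    then have "c * R * a (k1+5) \<le> c * R * (32 * a (k1+2))" using cR by (rule mult_left_mono)
    moreover have "\<delta> * a (k1+5) = (c * R * a (k1+5)) / 32" by (simp add: \<delta>_def)
    ultimately show ?thesis by linarith
  qed
  have b6: "\<delta> * a (k1+6) \<le> c * R * a (k1+2)"
  proof -
    have "a (k1+6) \<le> 32 * a (k1+2)" using a3 a4 a5' a6 a_pos[of "k1+2"] by linarith
    then have "c * R * a (k1+6) \<le> c * R * (32 * a (k1+2))" using cR by (rule mult_left_mono)
    moreover have "\<delta> * a (k1+6) = (c * R * a (k1+6)) / 32" by (simp add: \<delta>_def)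
    ultimately show ?thesis by linarith
  qed
  have b7: "\<delta> * a (k1+7) \<le> c * R * a (k1+2)"
  proof -
    have "a (k1+7) \<le> 32 * a (k1+2)" using a3 a4 a5' a6 a7 by linarith
    then have "c * R * a (k1+7) \<le> c * R * (32 * a (k1+2))" using cR by (rule mult_left_mono)
    moreover have "\<delta> * a (k1+7) = (c * R * a (k1+7)) / 32" by (simp add: \<delta>_def)
    ultimately show ?thesis by linarith
  qed
  have main: "e (k1+5+j) \<ge> \<delta> * a (k1+5+j)" for j
  proof (induction j rule: less_induct)
    case (less j)
    show ?case
    proof (cases "j < 3")
      case True
      have q1: "k1+5+1 = k1+6" "k1+5+2 = k1+7" by simp_all
      have "j = 0 \<or> j = 1 \<or> j = 2" using True by arith
      moreover have "e (k1+5+0) \<ge> \<delta> * a (k1+5+0)" using ek0 b5 by simp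
      moreover have "e (k1+5+1) \<ge> \<delta> * a (k1+5+1)" using ek0 ek1 b6 unfolding q1 by linarith
      moreover have "e (k1+5+2) \<ge> \<delta> * a (k1+5+2)" using ek0 ek1 ek2 b7 unfolding q1 by linarith
      ultimately show ?thesis by blast
    next
      case False
      define j' where "j' = j - 3"
      have j': "j = j' + 3" using False j'_def by simp
      have "e (k1+5+j'+3) \<ge> e (k1+5+j'+2) + e (k1+5+j')" using erec[of "k1+5+j'"] k1 by simp
      moreover have "e (k1+5+j'+2) \<ge> \<delta> * a (k1+5+j'+2)" using less.IH[of "j'+2"] j' by (simp add: add.assoc)
      moreover have "e (k1+5+j') \<ge> \<delta> * a (k1+5+j')" using less.IH[of "j'"] j' by simp
      moreover have "a (k1+5+j'+3) = a (k1+5+j'+2) + a (k1+5+j')" by (rule a_rec)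
      ultimately have "e (k1+5+j'+3) \<ge> \<delta> * a (k1+5+j'+3)" by (simp add: algebra_simps)
      then show ?thesis using j' by (simp add: add.assoc)
    qed
  qed
  define j where "j = k - (k1 + 5)"
  have "k = k1 + 5 + j" using kk k1 j_def by simp
  then have "e k \<ge> \<delta> * a k" using main by simp
  then show ?thesis unfolding e_def \<delta>_def by (simp add: algebra_simps)
qed

definition X :: "complex \<Rightarrow> nat \<Rightarrow> complex" where
  "X z N = (\<Sum>n=1..N. z ^ hofH n)"

lemma X_0: "X z 0 = 0" by (simp add: X_def)

lemma X_Suc: "X z (Suc N) = X z N + z ^ hofH (Suc N)"
  by (simp add: X_def)

lemma X_block: "t \<le> na k \<Longrightarrow> X z (na (k+2) + t) = X z (na (k+2)) + z ^ na (k+1) * X z t"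
proof (induct t)
  case 0 show ?case by (simp add: X_def)
next
  case (Suc t)
  have r: "na (k+3) = na (k+2) + na k" by (rule na_rec)
  have b: "hofH (na (k+2) + Suc t) = na (k+1) + hofH (Suc t)"
    using block_gen[of k "na (k+2) + Suc t"] Suc.prems r by simp
  have "X z (na (k+2) + Suc t) = X z (na (k+2) + t) + z ^ hofH (na (k+2) + Suc t)"
    using X_Suc[of z "na (k+2) + t"] by simp
  also have "\<dots> = X z (na (k+2)) + z ^ na (k+1) * X z t + z ^ na (k+1) * z ^ hofH (Suc t)"
    using Suc b by (simp add: power_add)
  also have "\<dots> = X z (na (k+2)) + z ^ na (k+1) * X z (Suc t)"
    by (simp add: X_Suc algebra_simps)
  finally show ?case .
qed

lemma x_rec: "X z (na (k+3)) = X z (na (k+2)) + z ^ na (k+1) * X z (na k)"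
  using X_block[of "na k" k z] na_rec[of k] by simp

lemma X_norm: "norm z = 1 \<Longrightarrow> norm (X z N) \<le> N"
  unfolding X_def using norm_sum[of "\<lambda>n. z ^ hofH n" "{1..N}"] by (simp add: norm_power)

lemma tri3: "norm ((A::complex) + B + C) \<le> norm A + norm B + norm C"
  using norm_triangle_ineq[of "A+B" C] norm_triangle_ineq[of A B] by linarith

lemma norm_one_plus_lt:
  fixes w :: complex assumes "norm w = 1" "w \<noteq> 1" shows "norm (1 + w) < 2"
proof -
  have "norm (1 + w) \<le> 2" using norm_triangle_ineq[of 1 w] assms by simp
  moreover have "norm (1 + w) \<noteq> 2"
  proof
    assume "norm (1 + w) = 2"
    then have "norm (1::complex) *\<^sub>R w = norm w *\<^sub>R 1" using norm_triangle_eq[of 1 w] assms by simp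
    then show False using assms by simp
  qed
  ultimately show ?thesis by simp
qed

lemma root_c:
  fixes z :: complex
  assumes "z ^ m = 1" "m \<ge> 1"
  shows "\<exists>c>0. c \<le> 1 \<and> (\<forall>j. z ^ j \<noteq> 1 \<longrightarrow> norm (1 + z ^ j) \<le> 2 - c)"
proof -
  have nz: "norm z = 1" using power_eq_1_iff[OF assms(1)] assms(2) by simp
  define S where "S = (\<lambda>j. 2 - norm (1 + z ^ j)) ` {j. j < m \<and> z ^ j \<noteq> 1}"
  have fS: "finite S" unfolding S_def by simp
  have pS: "s > 0" if sS: "s \<in> S" for s
  proof -
    obtain j where j: "s = 2 - norm (1 + z ^ j)" "z ^ j \<noteq> 1" using sS unfolding S_def by blast
    have "norm (z ^ j) = 1" by (simp add: norm_power nz)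
    then have "norm (1 + z ^ j) < 2" using norm_one_plus_lt j(2) by blast
    then show ?thesis using j(1) by linarith
  qed
  define c where "c = (if S = {} then 1 else min 1 (Min S))"
  have c0: "c > 0"
  proof (cases "S = {}")
    case False
    then have "Min S \<in> S" using fS by (rule Min_in[rotated])
    then show ?thesis using pS False unfolding c_def by simp
  qed (simp add: c_def)
  have c1: "c \<le> 1" by (simp add: c_def)
  have "norm (1 + z ^ j) \<le> 2 - c" if "z ^ j \<noteq> 1" for j
  proof -
    have "z ^ j = z ^ (m * (j div m) + j mod m)" by simp
    also have "\<dots> = (z ^ m) ^ (j div m) * z ^ (j mod m)" by (simp only: power_add power_mult)
    finally have e: "z ^ j = z ^ (j mod m)" using assms(1) by simp
    have "j mod m < m" using assms(2) by simp
    then have mem: "2 - norm (1 + z ^ j) \<in> S" unfolding S_def using e that by auto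
    then have ne: "S \<noteq> {}" by blast
    have "Min S \<le> 2 - norm (1 + z ^ j)" using Min_le[OF fS mem] .
    then have "c \<le> 2 - norm (1 + z ^ j)" using ne unfolding c_def by simp
    then show ?thesis by simp
  qed
  then show ?thesis using c0 c1 by blast
qed

lemma Lex_root:
  fixes z :: complex
  assumes "z \<noteq> 1"
  shows "z ^ na k \<noteq> 1 \<or> z ^ na (k+1) \<noteq> 1 \<or> z ^ na (k+2) \<noteq> 1"
proof (induct k)
  case 0 then show ?case using assms by simp
next
  case (Suc k)
  show ?case
  proof (rule ccontr)
    assume "\<not> ?case"
    then have h0: "z ^ na (Suc k) = 1" "z ^ na (Suc k + 1) = 1" "z ^ na (Suc k + 2) = 1" by blast+
    have q: "Suc k + 1 = k + 2" "Suc k + 2 = k + 3" by simp_all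
    have h: "z ^ na (k+1) = 1" "z ^ na (k+2) = 1" "z ^ na (k+3) = 1"
      using h0 unfolding q by simp_all
    have "z ^ na (k+3) = z ^ na (k+2) * z ^ na k" by (simp only: na_rec power_add)
    then have "z ^ na k = 1" using h by simp
    then show False using Suc h by blast
  qed
qed

lemma x_small:
  fixes z :: complex and \<epsilon> :: real
  assumes "z ^ m = 1" "m \<ge> 1" "z \<noteq> 1" "\<epsilon> > 0"
  shows "\<exists>K. \<forall>k\<ge>K. norm (X z (na k)) \<le> \<epsilon> * real (na k)"
proof -
  have nz: "norm z = 1" using power_eq_1_iff[OF assms(1)] assms(2) by simp
  obtain c where c: "c > 0" "c \<le> 1" "\<And>j. z ^ j \<noteq> 1 \<Longrightarrow> norm (1 + z ^ j) \<le> 2 - c"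
    using root_c[OF assms(1,2)] by blast
  define r where "r k = norm (X z (na k))" for k
  define a where "a k = real (na k)" for k
  define L where "L k = (z ^ na (k+3) \<noteq> 1)" for k
  have a_rec: "\<And>k. a (k+3) = a (k+2) + a k" by (simp add: a_def na_rec)
  have a_pos: "\<And>k. a k > 0" unfolding a_def using na_pos by (simp add: Suc_le_eq)
  have a_le: "\<And>k. a (Suc k) \<le> 2 * a k" using na_Suc_le unfolding a_def by (metis of_nat_le_iff of_nat_mult of_nat_numeral)
  have r_nn: "\<And>k. r k \<ge> 0" by (simp add: r_def)
  have un: "\<And>j. norm (z ^ j) = 1" by (simp add: norm_power nz)
  have xr: "\<And>k. X z (na (k+3)) = X z (na (k+2)) + z ^ na (k+1) * X z (na k)" by (rule x_rec)
  have r_rec: "\<And>k. r (k+3) \<le> r (k+2) + r k"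
  proof -
    fix k
    have "norm (X z (na (k+3))) \<le> norm (X z (na (k+2))) + norm (z ^ na (k+1) * X z (na k))"
      using xr[of k] norm_triangle_ineq by simp
    then show "r (k+3) \<le> r (k+2) + r k" by (simp add: r_def norm_mult un)
  qed
  have loss: "\<And>k. L k \<Longrightarrow> r (k+5) \<le> (2 - c) * r (k+2) + r (k+1) + r k"
  proof -
    fix k assume Lk: "L k"
    have q: "k+2+3 = k+5" "k+2+2 = k+4" "k+2+1 = k+3" "k+1+3 = k+4" "k+1+2 = k+3" "k+1+1 = k+2" by simp_all
    have e1: "X z (na (k+5)) = X z (na (k+4)) + z ^ na (k+3) * X z (na (k+2))" using xr[of "k+2"] unfolding q .
    have e2: "X z (na (k+4)) = X z (na (k+3)) + z ^ na (k+2) * X z (na (k+1))" using xr[of "k+1"] unfolding q .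
    have e3: "X z (na (k+3)) = X z (na (k+2)) + z ^ na (k+1) * X z (na k)" using xr[of k] .
    have E: "X z (na (k+5)) = (1 + z ^ na (k+3)) * X z (na (k+2)) + z ^ na (k+2) * X z (na (k+1)) + z ^ na (k+1) * X z (na k)"
      using e1 e2 e3 by (simp add: algebra_simps)
    have "norm (X z (na (k+5))) \<le> norm ((1 + z ^ na (k+3)) * X z (na (k+2))) + norm (z ^ na (k+2) * X z (na (k+1))) + norm (z ^ na (k+1) * X z (na k))"
      unfolding E by (rule tri3)
    also have "\<dots> = norm (1 + z ^ na (k+3)) * r (k+2) + r (k+1) + r k"
      by (simp add: norm_mult un r_def)
    also have "\<dots> \<le> (2 - c) * r (k+2) + r (k+1) + r k"
      using c(3)[of "na (k+3)"] Lk r_nn[of "k+2"] unfolding L_def by (simp add: mult_right_mono)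
    finally show "r (k+5) \<le> (2 - c) * r (k+2) + r (k+1) + r k" by (simp add: r_def)
  qed
  have Lex: "L k \<or> L (k+1) \<or> L (k+2)" for k
  proof -
    have q: "k+3+1 = k+1+3" "k+3+2 = k+2+3" by simp_all
    show ?thesis using Lex_root[OF assms(3), of "k+3"] unfolding L_def q .
  qed
  have iter: "\<forall>k\<ge>8*t. r k \<le> (1 - c/32)^t * a k" for t
  proof (induct t)
    case 0 show ?case using X_norm[OF nz] by (simp add: r_def a_def)
  next
    case (Suc t)
    have R: "(1 - c/32)^t \<ge> 0" using c by simp
    show ?case
    proof (intro allI impI)
      fix k assume "k \<ge> 8 * Suc t"
      then have "k \<ge> 8*t + 8" by simp
      from contract[OF a_rec a_pos a_le r_nn r_rec loss Lex c(1,2) R _ this] Suc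
      show "r k \<le> (1 - c/32)^Suc t * a k" by (simp add: algebra_simps)
    qed
  qed
  have "1 - c/32 < 1" using c by simp
  then obtain t where t: "(1 - c/32)^t < \<epsilon>" using real_arch_pow_inv assms(4) by blast
  show ?thesis
  proof (intro exI allI impI)
    fix k assume "k \<ge> 8*t"
    then have "r k \<le> (1 - c/32)^t * a k" using iter by blast
    also have "\<dots> \<le> \<epsilon> * a k" using t a_pos[of k] by (intro mult_right_mono) auto
    finally show "norm (X z (na k)) \<le> \<epsilon> * real (na k)" by (simp add: r_def a_def)
  qed
qed

lemma block_exists: assumes "na 2 < N" shows "\<exists>k. na (k+2) < N \<and> N \<le> na (k+3)"
proof -
  have "N \<le> na N" using strict_mono_imp_increasing[OF na_smono] by simp
  also have "\<dots> \<le> na (N+3)" by (simp add: na_le_iff)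
  finally have ex: "\<exists>k. N \<le> na (k+3)" by blast
  define k where "k = (LEAST k. N \<le> na (k+3))"
  have hk: "N \<le> na (k+3)" using LeastI_ex[OF ex] k_def by simp
  show ?thesis
  proof (cases k)
    case 0 then show ?thesis using hk assms by (intro exI[of _ 0]) (simp add: numeral_2_eq_2)
  next
    case (Suc k')
    then have nl: "\<not> N \<le> na (k'+3)" using not_less_Least[of k' "\<lambda>k. N \<le> na (k+3)"] k_def by simp
    have e: "k' + 3 = k + 2" using Suc by simp
    have "na (k+2) < N" using nl unfolding e by simp
    then show ?thesis using hk by blast
  qed
qed

lemma X_bound:
  fixes z :: complex and \<epsilon> :: real
  assumes nz: "norm z = 1" and e: "\<epsilon> \<ge> 0" and K: "\<And>k. k \<ge> K \<Longrightarrow> norm (X z (na k)) \<le> \<epsilon> * real (na k)"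
  shows "norm (X z N) \<le> \<epsilon> * real N + real (na (K+3))"
proof (induction N rule: less_induct)
  case (less N)
  show ?case
  proof (cases "N \<le> na (K+2)")
    case True
    have "na (K+2) \<le> na (K+3)" by (simp add: na_le_iff)
    then show ?thesis using X_norm[OF nz, of N] True e by (smt (verit) of_nat_0_le_iff of_nat_mono mult_nonneg_nonneg)
  next
    case False
    then have "na 2 < N" using na_le_iff[of 2 "K+2"] by simp
    then obtain k where k: "na (k+2) < N" "N \<le> na (k+3)" using block_exists by blast
    have kK: "k \<ge> K"
    proof (rule ccontr)
      assume "\<not> k \<ge> K"
      then have "na (k+3) \<le> na (K+2)" by (simp add: na_le_iff)
      then show False using k False by simp
    qed
    define t where "t = N - na (k+2)"
    have Nt: "N = na (k+2) + t" using k t_def by simp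
    have tk: "t \<le> na k" using k Nt na_rec[of k] by simp
    have tN: "t < N" using Nt na_pos[of "k+2"] by simp
    have XN: "X z N = X z (na (k+2)) + z ^ na (k+1) * X z t" using X_block[OF tk] Nt by simp
    have "norm (X z N) \<le> norm (X z (na (k+2))) + norm (X z t)"
      unfolding XN using norm_triangle_ineq[of "X z (na (k+2))" "z ^ na (k+1) * X z t"]
      by (simp add: norm_mult norm_power nz)
    also have "\<dots> \<le> \<epsilon> * real (na (k+2)) + (\<epsilon> * real t + real (na (K+3)))"
      using K[of "k+2"] kK less.IH[OF tN] by simp
    also have "\<dots> = \<epsilon> * real N + real (na (K+3))" using Nt by (simp add: algebra_simps)
    finally show ?thesis .
  qed
qed

lemma X_lim:
  fixes z :: complex
  assumes "z ^ m = 1" "m \<ge> 1" "z \<noteq> 1"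
  shows "(\<lambda>N. X z N / of_nat N) \<longlonglongrightarrow> 0"
proof (rule LIMSEQ_I)
  fix r :: real assume r: "r > 0"
  have nz: "norm z = 1" using power_eq_1_iff[OF assms(1)] assms(2) by simp
  obtain K where K: "\<forall>k\<ge>K. norm (X z (na k)) \<le> (r/2) * real (na k)"
    using x_small[OF assms, of "r/2"] r by auto
  define B where "B = real (na (K+3))"
  have bd: "norm (X z N) \<le> (r/2) * real N + B" for N
    using X_bound[OF nz, of "r/2" K N] K r unfolding B_def by simp
  define no where "no = nat \<lceil>2 * B / r\<rceil> + 1"
  show "\<exists>no. \<forall>n\<ge>no. norm (X z n / of_nat n - 0) < r"
  proof (intro exI allI impI)
    fix n assume n: "n \<ge> no"
    have npos: "real n > 0" using n no_def by simp
    have "real n > 2 * B / r" using n no_def by linarith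
    then have "2 * B < r * real n" using r by (simp add: field_simps)
    then have "norm (X z n) < r * real n" using bd[of n] by linarith
    then show "norm (X z n / of_nat n - 0) < r" using npos
      by (simp add: norm_divide field_simps)
  qed
qed

lemma root_facts:
  assumes m: "m \<ge> 1"
  defines "w \<equiv> exp (2 * of_real pi * \<i> / of_nat m)"
  shows "\<And>s. w ^ s = 1 \<longleftrightarrow> m dvd s"
    and "\<And>s. (\<Sum>t<m. (w ^ s) ^ t) = (if m dvd s then of_nat m else 0)"
proof -
  have ws: "w ^ s = exp (2 * of_real pi * \<i> * of_nat s / of_nat m)" for s
  proof -
    have "w ^ s = exp (of_nat s * (2 * of_real pi * \<i> / of_nat m))"
      unfolding w_def by (rule exp_of_nat_mult[symmetric])
    also have "of_nat s * (2 * of_real pi * \<i> / of_nat m) = 2 * of_real pi * \<i> * of_nat s / (of_nat m :: complex)"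
      by (simp add: field_simps)
    finally show ?thesis .
  qed
  show w1: "w ^ s = 1 \<longleftrightarrow> m dvd s" for s
    unfolding ws using complex_root_unity_eq_1[OF m] by blast
  show "(\<Sum>t<m. (w ^ s) ^ t) = (if m dvd s then of_nat m else 0)" for s
  proof (cases "m dvd s")
    case True then show ?thesis using w1[of s] by simp
  next
    case False
    have "(w ^ s) ^ m = (w ^ m) ^ s" by (simp add: power_mult[symmetric] mult.commute)
    also have "w ^ m = 1" using w1[of m] by simp
    finally have "(w ^ s) ^ m = 1" by simp
    then show ?thesis using False w1[of s] by (simp add: sum_gp_strict)
  qed
qed

lemma dvd_shift_iff:
  fixes a m j :: nat
  assumes "j < m"
  shows "m dvd (a + (m - j)) \<longleftrightarrow> a mod m = j"
proof -
  define r where "r = a mod m"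
  have rm: "r < m" using assms r_def by simp
  have "(a + (m - j)) mod m = (r + (m - j)) mod m" unfolding r_def by (simp add: mod_add_left_eq)
  also have "\<dots> = (if j \<le> r then r - j else r + (m - j))"
  proof (cases "j \<le> r")
    case True
    then have "r + (m - j) = (r - j) + m" using assms by simp
    then have "(r + (m - j)) mod m = (r - j) mod m" by simp
    then show ?thesis using True rm by simp
  next
    case False
    then show ?thesis using assms by simp
  qed
  finally show ?thesis unfolding dvd_eq_mod_eq_0 r_def[symmetric] using assms by auto
qed

theorem mainTheorem8:
  fixes m j :: nat
  assumes "m \<ge> 1" and "j < m"
  shows "(\<lambda>N. real (card {n \<in> {1..N}. hofH n mod m = j}) / real N)
           \<longlonglongrightarrow> 1 / real m"
proof -
  define w where "w = exp (2 * of_real pi * \<i> / of_nat m)"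
  have w1: "\<And>s. w ^ s = 1 \<longleftrightarrow> m dvd s" using root_facts(1)[OF assms(1)] w_def by blast
  have ws: "\<And>s. (\<Sum>t<m. (w ^ s) ^ t) = (if m dvd s then of_nat m else 0)"
    using root_facts(2)[OF assms(1)] w_def by blast
  have mpos: "(of_nat m :: complex) \<noteq> 0" using assms(1) by simp
  have ind: "(if hofH n mod m = j then of_nat m else 0) = (\<Sum>t<m. (w ^ t) ^ (m - j) * (w ^ t) ^ hofH n)" for n
  proof -
    have "(if hofH n mod m = j then of_nat m else 0) = (\<Sum>t<m. (w ^ (hofH n + (m - j))) ^ t)"
      using ws[of "hofH n + (m - j)"] dvd_shift_iff[OF assms(2), of "hofH n"] by simp
    also have "\<dots> = (\<Sum>t<m. (w ^ t) ^ (m - j) * (w ^ t) ^ hofH n)"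
    proof (rule sum.cong[OF refl])
      fix t
      have "(w ^ (hofH n + (m - j))) ^ t = (w ^ t) ^ (hofH n + (m - j))"
        by (metis power_mult mult.commute)
      then show "(w ^ (hofH n + (m - j))) ^ t = (w ^ t) ^ (m - j) * (w ^ t) ^ hofH n"
        by (simp add: power_add mult.commute)
    qed
    finally show ?thesis .
  qed
  have card_eq: "of_nat (card {n \<in> {1..N}. hofH n mod m = j}) * of_nat m
      = (\<Sum>t<m. (w ^ t) ^ (m - j) * X (w ^ t) N)" for N
  proof -
    have "of_nat (card {n \<in> {1..N}. hofH n mod m = j}) * (of_nat m :: complex)
        = (\<Sum>n\<in>{n \<in> {1..N}. hofH n mod m = j}. of_nat m)" by simp
    also have "\<dots> = (\<Sum>n\<in>{1..N}. if hofH n mod m = j then of_nat m else 0)"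
      by (rule sum.inter_filter) simp
    also have "\<dots> = (\<Sum>n\<in>{1..N}. \<Sum>t<m. (w ^ t) ^ (m - j) * (w ^ t) ^ hofH n)"
      using ind by simp
    also have "\<dots> = (\<Sum>t<m. \<Sum>n\<in>{1..N}. (w ^ t) ^ (m - j) * (w ^ t) ^ hofH n)"
      by (rule sum.swap)
    also have "\<dots> = (\<Sum>t<m. (w ^ t) ^ (m - j) * X (w ^ t) N)"
      by (simp add: X_def sum_distrib_left)
    finally show ?thesis .
  qed
  define f where "f N = real (card {n \<in> {1..N}. hofH n mod m = j}) / real N" for N
  have fe: "complex_of_real (f N) = (1 / of_nat m) * (\<Sum>t<m. (w ^ t) ^ (m - j) * (X (w ^ t) N / of_nat N))" for N
  proof -
    have "complex_of_real (f N) = of_nat (card {n \<in> {1..N}. hofH n mod m = j}) / of_nat N"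
      by (simp add: f_def)
    also have "\<dots> = (of_nat (card {n \<in> {1..N}. hofH n mod m = j}) * of_nat m) / of_nat m / of_nat N"
      using mpos by simp
    also have "\<dots> = (\<Sum>t<m. (w ^ t) ^ (m - j) * X (w ^ t) N) / of_nat m / of_nat N"
      unfolding card_eq ..
    also have "\<dots> = (1 / of_nat m) * (\<Sum>t<m. (w ^ t) ^ (m - j) * (X (w ^ t) N / of_nat N))"
      by (simp add: sum_divide_distrib[symmetric] times_divide_eq_right mult.assoc)
    finally show ?thesis .
  qed
  have lim_t: "(\<lambda>N. (w ^ t) ^ (m - j) * (X (w ^ t) N / of_nat N)) \<longlonglongrightarrow> (if t = 0 then 1 else 0)"
    if t: "t \<in> {..<m}" for t
  proof (cases "t = 0")
    case True
    have X1: "X 1 N = of_nat N" for N by (simp add: X_def)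
    have ev: "eventually (\<lambda>N. (1::complex) = (w ^ t) ^ (m - j) * (X (w ^ t) N / of_nat N)) sequentially"
      using True by (intro eventually_sequentiallyI[of 1]) (simp add: X1)
    show ?thesis using Lim_transform_eventually[OF tendsto_const ev] True by simp
  next
    case False
    have "(w ^ t) ^ m = (w ^ m) ^ t" by (metis power_mult mult.commute)
    then have zm: "(w ^ t) ^ m = 1" using w1[of m] by simp
    have zn: "w ^ t \<noteq> 1" using w1[of t] False t by (auto dest: dvd_imp_le)
    have "(\<lambda>N. X (w ^ t) N / of_nat N) \<longlonglongrightarrow> 0" by (rule X_lim[OF zm assms(1) zn])
    then have "(\<lambda>N. (w ^ t) ^ (m - j) * (X (w ^ t) N / of_nat N)) \<longlonglongrightarrow> (w ^ t) ^ (m - j) * 0"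
      by (rule tendsto_mult_left)
    then show ?thesis using False by simp
  qed
  have "(\<lambda>N. \<Sum>t<m. (w ^ t) ^ (m - j) * (X (w ^ t) N / of_nat N)) \<longlonglongrightarrow> (\<Sum>t<m. if t = 0 then (1::complex) else 0)"
    by (rule tendsto_sum) (rule lim_t)
  moreover have "(\<Sum>t<m. if t = 0 then (1::complex) else 0) = 1" using assms(1) by simp
  ultimately have L1: "(\<lambda>N. \<Sum>t<m. (w ^ t) ^ (m - j) * (X (w ^ t) N / of_nat N)) \<longlonglongrightarrow> 1"
    by simp
  have "(\<lambda>N. (1 / of_nat m) * (\<Sum>t<m. (w ^ t) ^ (m - j) * (X (w ^ t) N / of_nat N))) \<longlonglongrightarrow> (1 / of_nat m) * 1"
    using L1 by (rule tendsto_mult_left)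
  then have "(\<lambda>N. complex_of_real (f N)) \<longlonglongrightarrow> complex_of_real (1 / real m)"
    unfolding fe by simp
  then have "f \<longlonglongrightarrow> 1 / real m" by (rule tendsto_of_real_iff[THEN iffD1])
  then show ?thesis unfolding f_def .
qed

end
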